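(* Let $n\in\mathbb{N}$, $y_1,\dots,y_n\in\{-1,+1\}$, let $K\in\mathbb{R}^{n\times n}$ be a symmetric strictly positive definite matrix with columns $K_1,\dots,K_n$, and let $\ell:\mathbb{R}\to\mathbb{R}$ be convex and twice continuously differentiable. For $c\in\mathbb{R}^n_{\ge0}$ let $(\alpha^\star,b^\star)$ be a solution of $$\min_{\alpha\in\mathbb{R}^n,\,b\in\mathbb{R}}\ \tfrac12\alpha^\top K\alpha+\sum_{i=1}^nc_i\,\ell\big(y_i[K_i^\top\alpha+b]\big),$$ and define $u_i=y_i\,\ell'(y_i[K_i^\top\alpha^\star+b^\star])$ and $v_i=c_i\,\ell''(y_i[K_i^\top\alpha^\star+b^\star])$, $i=1,\dots,n$. If $v\neq0$, then the solution is unique, $\alpha^\star$ and $b^\star$ are continuously differentiable functions of $c$, and $$\begin{bmatrix}\partial\alpha^\star/\partial c\\ \partial b^\star/\partial c\end{bmatrix}=-\begin{bmatrix}I+\operatorname{diag}(v)K & v\\ \mathbf 1^\top & 0\end{bmatrix}^{-1}\begin{bmatrix}\operatorname{diag}(u)\\ 0^\top\end{bmatrix}.$$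
   Context: $\mathbf 1$ is the all-ones vector in $\mathbb{R}^n$, $I$ the $n\times n$ identity, $\partial\alpha^\star/\partial c$ the $n\times n$ Jacobian and $\partial b^\star/\partial c$ the $1\times n$ row of partial derivatives. *)

theory Defs
  imports "HOL-Analysis.Analysis"
begin

definition svm_obj :: "(real \<Rightarrow> real) \<Rightarrow> real^'n^'n \<Rightarrow> real^'n \<Rightarrow> real^'n
    \<Rightarrow> real^'n \<Rightarrow> real \<Rightarrow> real" where
  "svm_obj l K y c a b =
     1/2 * (a \<bullet> (K *v a)) + (\<Sum>i\<in>UNIV. c$i * l (y$i * ((transpose K *v a)$i + b)))"

definition is_solution :: "(real \<Rightarrow> real) \<Rightarrow> real^'n^'n \<Rightarrow> real^'n \<Rightarrow> real^'n
    \<Rightarrow> real^'n \<Rightarrow> real \<Rightarrow> bool" where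
  "is_solution l K y c a b \<longleftrightarrow> (\<forall>a' b'. svm_obj l K y c a b \<le> svm_obj l K y c a' b')"

definition margin :: "real^'n^'n \<Rightarrow> real^'n \<Rightarrow> real^'n \<Rightarrow> real \<Rightarrow> real^'n" where
  "margin K y a b = (\<chi> i. y$i * ((transpose K *v a)$i + b))"

text \<open>Block matrix [[I + diag(v) K, v], [1^T, 0]], index None = the extra (b) row/column.\<close>
definition kkt_matrix :: "real^'n^'n \<Rightarrow> real^'n \<Rightarrow> real^('n option)^('n option)" where
  "kkt_matrix K v = (\<chi> p q. case (p, q) of
       (Some i, Some j) \<Rightarrow> (if i = j then 1 else 0) + v$i * K$i$j
     | (Some i, None) \<Rightarrow> v$i
     | (None, Some j) \<Rightarrow> 1
     | (None, None) \<Rightarrow> 0)"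

definition rhs_matrix :: "real^'n \<Rightarrow> real^'n^('n option)" where
  "rhs_matrix u = (\<chi> p j. case p of Some i \<Rightarrow> (if i = j then u$i else 0) | None \<Rightarrow> 0)"

definition stacked_jacobian :: "(real^'n \<Rightarrow> real^'n) \<Rightarrow> (real^'n \<Rightarrow> real) \<Rightarrow> real^'n^('n option)" where
  "stacked_jacobian DA DB = (\<chi> p j. case p of Some i \<Rightarrow> DA (axis j 1) $ i | None \<Rightarrow> DB (axis j 1))"

end

theory Submission
  imports Defs
begin

lemma sum_option: "(\<Sum>p\<in>(UNIV::'n::finite option set). f p) = f None + (\<Sum>i\<in>UNIV. f (Some i))"
  by (simp add: UNIV_option_conv sum.reindex)
lemma mat_axis: fixes A :: "real^'m^'n" shows "(A *v axis j 1) $ i = A $ i $ j"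
  by (metis cart_eq_inner_axis matrix_vector_mul_component)
lemma has_derivative_vec_lambda:
  fixes f :: "'i::finite \<Rightarrow> 'a::real_normed_vector \<Rightarrow> real"
  assumes "\<And>i. (f i has_derivative f' i) (at x within S)"
  shows "((\<lambda>x. \<chi> i. f i x) has_derivative (\<lambda>h. \<chi> i. f' i h)) (at x within S)"
  apply (rule has_derivative_componentwise_within[THEN iffD2])
proof (intro ballI)
  fix b :: "real^'i" assume "b \<in> Basis"
  then obtain i where b: "b = axis i 1" using axis_inverse by blast
  have "((\<lambda>x. (\<chi> i. f i x) $ i) has_derivative (\<lambda>h. (\<chi> i. f' i h) $ i)) (at x within S)"
    using assms[of i] by simp
  then show "((\<lambda>x. (\<chi> i. f i x) \<bullet> b) has_derivative (\<lambda>h. (\<chi> i. f' i h) \<bullet> b)) (at x within S)"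
    unfolding b cart_eq_inner_axis .
qed
lemma cvx_tangent:
  assumes cvx: "convex_on UNIV l" and d1: "\<forall>x. (l has_real_derivative l1 x) (at x)"
  shows "l x - l t \<ge> l1 t * (x - t)"
  by (rule convex_on_imp_above_tangent[OF cvx]) (use d1 in auto)

lemma cvx_mono:
  assumes cvx: "convex_on UNIV l" and d1: "\<forall>x. (l has_real_derivative l1 x) (at x)"
    and st: "s \<le> t"
  shows "l1 s \<le> l1 t"
proof -
  have "l t - l s \<ge> l1 s * (t - s)" by (rule cvx_tangent[OF cvx d1])
  moreover have "l s - l t \<ge> l1 t * (s - t)" by (rule cvx_tangent[OF cvx d1])
  ultimately have "(l1 t - l1 s) * (t - s) \<ge> 0" by (simp add: algebra_simps)
  then show ?thesis using st
    by (cases "s = t") (auto simp: zero_le_mult_iff)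
qed

lemma cvx_l2_nonneg:
  assumes cvx: "convex_on UNIV l" and d1: "\<forall>x. (l has_real_derivative l1 x) (at x)"
    and d2: "\<forall>x. (l1 has_real_derivative l2 x) (at x)"
  shows "l2 t \<ge> 0"
proof (rule ccontr)
  assume "\<not> l2 t \<ge> 0"
  then have "l2 t < 0" by simp
  from DERIV_neg_dec_right[OF d2[rule_format] this] obtain d where
    "d > 0" "\<forall>h>0. h < d \<longrightarrow> l1 (t + h) < l1 t" by blast
  then have "l1 (t + d/2) < l1 t" by auto
  moreover have "l1 t \<le> l1 (t + d/2)" using \<open>d > 0\<close> by (intro cvx_mono[OF cvx d1]) auto
  ultimately show False by simp
qed

lemma cvx_strict:
  assumes cvx: "convex_on UNIV l" and d1: "\<forall>x. (l has_real_derivative l1 x) (at x)"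
    and d2: "\<forall>x. (l1 has_real_derivative l2 x) (at x)"
    and l2t: "l2 t \<noteq> 0" and d: "d \<noteq> 0"
  shows "l (t + d) - l t - l1 t * d > 0"
proof (rule ccontr)
  assume a: "\<not> ?thesis"
  have ge: "l (t + d) - l t \<ge> l1 t * d" using cvx_tangent[OF cvx d1, where x="t+d" and t=t] by simp
  with a have eq: "l (t + d) - l t = l1 t * d" by simp
  have pos: "l2 t > 0" using cvx_l2_nonneg[OF cvx d1 d2, of t] l2t by simp
  show False
  proof (cases "d > 0")
    case True
    from MVT2[of t "t + d" l l1] True d1 obtain z where z: "t < z" "z < t + d"
      "l (t + d) - l t = (t + d - t) * l1 z" by auto
    with eq True have lz: "l1 z = l1 t" by simp
    from DERIV_pos_inc_right[OF d2[rule_format] pos] obtain e where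
      "e > 0" "\<forall>h>0. h < e \<longrightarrow> l1 t < l1 (t + h)" by blast
    then have "l1 t < l1 (t + min (e/2) (z - t))" using z by auto
    moreover have "l1 (t + min (e/2) (z - t)) \<le> l1 z" by (intro cvx_mono[OF cvx d1]) auto
    ultimately show False using lz by simp
  next
    case False
    with d have dn: "d < 0" by simp
    from MVT2[of "t + d" t l l1] dn d1 obtain z where z: "t + d < z" "z < t"
      "l t - l (t + d) = (t - (t + d)) * l1 z" by auto
    with eq dn have lz: "l1 z = l1 t" by (simp add: algebra_simps)
    from DERIV_pos_inc_left[OF d2[rule_format] pos] obtain e where
      "e > 0" "\<forall>h>0. h < e \<longrightarrow> l1 (t - h) < l1 t" by blast
    then have "l1 (t - min (e/2) (t - z)) < l1 t" using z by auto
    moreover have "l1 z \<le> l1 (t - min (e/2) (t - z))" by (intro cvx_mono[OF cvx d1]) auto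
    ultimately show False using lz by simp
  qed
qed
lemma sym_inner:
  fixes K :: "real^'n^'n" assumes sym: "transpose K = K"
  shows "x \<bullet> (K *v z) = z \<bullet> (K *v x)"
  by (metis dot_lmul_matrix inner_commute sym transpose_matrix_vector)

lemma inner_vec_sum: "(x::real^'n) \<bullet> z = (\<Sum>i\<in>UNIV. x$i * z$i)"
  by (simp add: inner_vec_def)

lemma obj_identity:
  fixes K :: "real^'n^'n"
  assumes sym: "transpose K = K"
    and st1: "a + (\<chi> i. c$i * (y$i * l1 (margin K y a b $ i))) = 0"
    and st2: "(\<Sum>i\<in>UNIV. c$i * (y$i * l1 (margin K y a b $ i))) = 0"
  shows "svm_obj l K y c a' b' - svm_obj l K y c a b =
     1/2 * ((a' - a) \<bullet> (K *v (a' - a))) +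
     (\<Sum>i\<in>UNIV. c$i * (l (margin K y a' b' $ i) - l (margin K y a b $ i)
         - l1 (margin K y a b $ i) * (margin K y a' b' $ i - margin K y a b $ i)))"
proof -
  define h where "h = a' - a"
  define s where "s = b' - b"
  define t where "t = margin K y a b"
  define t' where "t' = margin K y a' b'"
  define u where "u = (\<chi> i. y$i * l1 (t $ i))"
  have a': "a' = a + h" by (simp add: h_def)
  have tdiff: "t' $ i - t $ i = y$i * ((K *v h)$i + s)" for i
    by (simp add: t_def t'_def margin_def sym h_def s_def matrix_vector_mult_diff_distrib algebra_simps)
  have qa: "(\<chi> i. c$i * u$i) = - a" using st1 unfolding u_def t_def
    by (simp add: eq_neg_iff_add_eq_0 add.commute)
  have su: "(\<Sum>i\<in>UNIV. c$i * u$i) = 0" using st2 by (simp add: u_def t_def)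
  have "(\<Sum>i\<in>UNIV. c$i * (l1 (t$i) * (t'$i - t$i)))
      = (\<Sum>i\<in>UNIV. (c$i * u$i) * (K *v h)$i) + s * (\<Sum>i\<in>UNIV. c$i * u$i)"
    by (simp add: tdiff u_def sum_distrib_left algebra_simps sum.distrib)
  also have "(\<Sum>i\<in>UNIV. (c$i * u$i) * (K *v h)$i) = (\<chi> i. c$i * u$i) \<bullet> (K *v h)"
    by (simp add: inner_vec_sum)
  also have "\<dots> = - (a \<bullet> (K *v h))" by (simp add: qa)
  finally have lin: "(\<Sum>i\<in>UNIV. c$i * (l1 (t$i) * (t'$i - t$i))) = - (a \<bullet> (K *v h))"
    by (simp add: su)
  have quad: "1/2 * (a' \<bullet> (K *v a')) - 1/2 * (a \<bullet> (K *v a)) = 1/2 * (h \<bullet> (K *v h)) + a \<bullet> (K *v h)"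
    using sym_inner[OF sym, of h a]
    by (simp add: a' matrix_vector_right_distrib inner_add_left inner_add_right algebra_simps)
  have "svm_obj l K y c a' b' - svm_obj l K y c a b
     = (1/2 * (a' \<bullet> (K *v a')) - 1/2 * (a \<bullet> (K *v a)))
       + ((\<Sum>i\<in>UNIV. c$i * l (t'$i)) - (\<Sum>i\<in>UNIV. c$i * l (t$i)))"
    by (simp add: svm_obj_def t_def t'_def margin_def)
  also have "(\<Sum>i\<in>UNIV. c$i * l (t'$i)) - (\<Sum>i\<in>UNIV. c$i * l (t$i))
      = (\<Sum>i\<in>UNIV. c$i * (l (t'$i) - l (t$i) - l1 (t$i) * (t'$i - t$i)))
        + (\<Sum>i\<in>UNIV. c$i * (l1 (t$i) * (t'$i - t$i)))"
    by (simp add: sum_subtractf[symmetric] sum.distrib[symmetric] algebra_simps)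
  finally show ?thesis
    unfolding quad lin by (simp add: h_def t_def t'_def)
qed
lemma stat_optimal:
  fixes K :: "real^'n^'n"
  assumes sym: "transpose K = K"
    and pd: "\<forall>x. x \<noteq> 0 \<longrightarrow> x \<bullet> (K *v x) > 0"
    and cvx: "convex_on UNIV l" and d1: "\<forall>x. (l has_real_derivative l1 x) (at x)"
    and cn: "\<forall>i. c$i \<ge> 0"
    and st1: "a + (\<chi> i. c$i * (y$i * l1 (margin K y a b $ i))) = 0"
    and st2: "(\<Sum>i\<in>UNIV. c$i * (y$i * l1 (margin K y a b $ i))) = 0"
  shows "is_solution l K y c a b"
  unfolding is_solution_def
proof (intro allI)
  fix a' b'
  have q: "(a' - a) \<bullet> (K *v (a' - a)) \<ge> 0"
    using pd by (cases "a' - a = 0") (auto intro: less_imp_le)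
  have e: "(\<Sum>i\<in>UNIV. c$i * (l (margin K y a' b' $ i) - l (margin K y a b $ i)
         - l1 (margin K y a b $ i) * (margin K y a' b' $ i - margin K y a b $ i))) \<ge> 0"
    using cvx_tangent[OF cvx d1] cn by (intro sum_nonneg mult_nonneg_nonneg) (auto simp: algebra_simps)
  show "svm_obj l K y c a b \<le> svm_obj l K y c a' b'"
    using obj_identity[OF sym st1 st2, of l a' b'] q e by simp
qed

lemma stat_unique:
  fixes K :: "real^'n^'n"
  assumes sym: "transpose K = K"
    and pd: "\<forall>x. x \<noteq> 0 \<longrightarrow> x \<bullet> (K *v x) > 0"
    and cvx: "convex_on UNIV l" and d1: "\<forall>x. (l has_real_derivative l1 x) (at x)"
    and d2: "\<forall>x. (l1 has_real_derivative l2 x) (at x)"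
    and y: "\<forall>i. y$i = 1 \<or> y$i = -1"
    and cn: "\<forall>i. c$i \<ge> 0"
    and st1: "a + (\<chi> i. c$i * (y$i * l1 (margin K y a b $ i))) = 0"
    and st2: "(\<Sum>i\<in>UNIV. c$i * (y$i * l1 (margin K y a b $ i))) = 0"
    and vnz: "(\<chi> i. c$i * l2 (margin K y a b $ i)) \<noteq> 0"
    and sol: "is_solution l K y c a' b'"
  shows "a' = a \<and> b' = b"
proof -
  define E where "E i = c$i * (l (margin K y a' b' $ i) - l (margin K y a b $ i)
         - l1 (margin K y a b $ i) * (margin K y a' b' $ i - margin K y a b $ i))" for i
  have q: "(a' - a) \<bullet> (K *v (a' - a)) \<ge> 0"
    using pd by (cases "a' - a = 0") (auto intro: less_imp_le)
  have Enn: "E i \<ge> 0" for i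
    using cvx_tangent[OF cvx d1] cn unfolding E_def by (intro mult_nonneg_nonneg) (auto simp: algebra_simps)
  have e: "(\<Sum>i\<in>UNIV. E i) \<ge> 0" using Enn by (simp add: sum_nonneg)
  have opt: "is_solution l K y c a b" by (rule stat_optimal[OF sym pd cvx d1 cn st1 st2])
  have "svm_obj l K y c a' b' - svm_obj l K y c a b = 0"
  proof -
    have "svm_obj l K y c a b \<le> svm_obj l K y c a' b'" using opt unfolding is_solution_def by blast
    moreover have "svm_obj l K y c a' b' \<le> svm_obj l K y c a b" using sol unfolding is_solution_def by blast
    ultimately show ?thesis by linarith
  qed
  then have z: "1/2 * ((a' - a) \<bullet> (K *v (a' - a))) + (\<Sum>i\<in>UNIV. E i) = 0"
    using obj_identity[OF sym st1 st2, of l a' b'] by (simp add: E_def)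
  then have "(a' - a) \<bullet> (K *v (a' - a)) = 0" using q e by linarith
  then have aa: "a' = a" using pd by (metis order_less_irrefl eq_iff_diff_eq_0)
  have "(\<Sum>i\<in>UNIV. E i) = 0" using z q e by linarith
  then have E0: "E i = 0" for i using Enn by (simp add: sum_nonneg_eq_0_iff)
  obtain i where vi: "c$i * l2 (margin K y a b $ i) \<noteq> 0"
    using vnz by (metis (mono_tags, lifting) vec_eq_iff vec_lambda_beta zero_index)
  have bb: "b' = b"
  proof (rule ccontr)
    assume "b' \<noteq> b"
    define t where "t = margin K y a b $ i"
    define d where "d = y$i * (b' - b)"
    have d0: "d \<noteq> 0" using y \<open>b' \<noteq> b\<close> unfolding d_def by (metis mult_eq_0_iff eq_iff_diff_eq_0 zero_neq_one neg_equal_0_iff_equal one_neq_zero)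
    have t': "margin K y a' b' $ i = t + d"
      by (simp add: t_def d_def margin_def aa algebra_simps)
    have ci: "c$i > 0" using vi cn by (metis less_eq_real_def mult_eq_0_iff)
    have "l2 t \<noteq> 0" using vi by (simp add: t_def)
    from cvx_strict[OF cvx d1 d2 this d0] have "l (t + d) - l t - l1 t * d > 0" .
    then have "E i > 0" using ci unfolding E_def t' by (simp add: t_def)
    then show False using E0 by simp
  qed
  show ?thesis using aa bb by simp
qed
lemma sol_deriv_zero:
  fixes K :: "real^'n^'n"
  assumes sym: "transpose K = K"
    and d1: "\<forall>x. (l has_real_derivative l1 x) (at x)"
    and sol: "is_solution l K y c a b"
  shows "w \<bullet> (K *v a) + (\<Sum>i\<in>UNIV. c$i * (l1 (margin K y a b $ i) * (y$i * ((K *v w)$i + \<sigma>)))) = 0"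
proof -
  define t where "t = margin K y a b"
  define q where "q i = y$i * ((K *v w)$i + \<sigma>)" for i
  define P where "P = a \<bullet> (K *v a)"
  define R where "R = w \<bullet> (K *v w)"
  define Q where "Q = 2 * (w \<bullet> (K *v a))"
  define \<phi> where "\<phi> \<tau> = 1/2 * (P + \<tau> * Q + \<tau>^2 * R) + (\<Sum>i\<in>UNIV. c$i * l (t$i + \<tau> * q i))" for \<tau>
  have eq: "\<phi> \<tau> = svm_obj l K y c (a + \<tau> *\<^sub>R w) (b + \<tau> * \<sigma>)" for \<tau>
  proof -
    have "(a + \<tau> *\<^sub>R w) \<bullet> (K *v (a + \<tau> *\<^sub>R w)) = P + \<tau> * Q + \<tau>^2 * R"
      using sym_inner[OF sym, of a w]
      by (simp add: P_def Q_def R_def matrix_vector_right_distrib matrix_vector_mult_scaleR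
          inner_add_left inner_add_right power2_eq_square algebra_simps)
    moreover have "y$i * ((transpose K *v (a + \<tau> *\<^sub>R w))$i + (b + \<tau> * \<sigma>)) = t$i + \<tau> * q i" for i
      by (simp add: sym t_def q_def margin_def matrix_vector_right_distrib matrix_vector_mult_scaleR algebra_simps)
    ultimately show ?thesis by (simp add: \<phi>_def svm_obj_def)
  qed
  have der: "(\<phi> has_real_derivative (1/2 * Q + (\<Sum>i\<in>UNIV. c$i * (l1 (t$i) * q i)))) (at 0)"
  proof -
    have "((\<lambda>\<tau>. c$i * l (t$i + \<tau> * q i)) has_real_derivative c$i * (l1 (t$i + 0 * q i) * q i)) (at 0)" for i
      by (intro DERIV_cmult DERIV_chain2[OF d1[rule_format]]) (auto intro!: derivative_eq_intros)
    then have "((\<lambda>\<tau>. \<Sum>i\<in>UNIV. c$i * l (t$i + \<tau> * q i)) has_real_derivative (\<Sum>i\<in>UNIV. c$i * (l1 (t$i) * q i))) (at 0)"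
      by (auto intro!: DERIV_sum)
    moreover have "((\<lambda>\<tau>. 1/2 * (P + \<tau> * Q + \<tau>^2 * R)) has_real_derivative 1/2 * Q) (at 0)"
      by (auto intro!: derivative_eq_intros)
    ultimately show ?thesis unfolding \<phi>_def
      using DERIV_add by blast
  qed
  have "1/2 * Q + (\<Sum>i\<in>UNIV. c$i * (l1 (t$i) * q i)) = 0"
  proof (rule DERIV_local_min[OF der, of 1])
    show "\<forall>z. \<bar>0 - z\<bar> < 1 \<longrightarrow> \<phi> 0 \<le> \<phi> z"
      using sol unfolding is_solution_def eq by simp
  qed simp
  then show ?thesis by (simp add: Q_def q_def t_def)
qed

lemma sol_stationary:
  fixes K :: "real^'n^'n"
  assumes sym: "transpose K = K"
    and pd: "\<forall>x. x \<noteq> 0 \<longrightarrow> x \<bullet> (K *v x) > 0"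
    and d1: "\<forall>x. (l has_real_derivative l1 x) (at x)"
    and sol: "is_solution l K y c a b"
  shows "a + (\<chi> i. c$i * (y$i * l1 (margin K y a b $ i))) = 0"
    and "(\<Sum>i\<in>UNIV. c$i * (y$i * l1 (margin K y a b $ i))) = 0"
proof -
  define q where "q = (\<chi> i. c$i * (y$i * l1 (margin K y a b $ i)))"
  from sol_deriv_zero[OF sym d1 sol, of 0 1]
  show s2: "(\<Sum>i\<in>UNIV. c$i * (y$i * l1 (margin K y a b $ i))) = 0"
    by (simp add: algebra_simps)
  define w where "w = a + q"
  from sol_deriv_zero[OF sym d1 sol, of w 0]
  have "w \<bullet> (K *v a) + (\<Sum>i\<in>UNIV. q$i * (K *v w)$i) = 0"
    by (simp add: q_def algebra_simps)
  then have "w \<bullet> (K *v a) + q \<bullet> (K *v w) = 0" by (simp add: inner_vec_sum)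
  then have "w \<bullet> (K *v a) + w \<bullet> (K *v q) = 0" using sym_inner[OF sym, of q w] by simp
  then have "w \<bullet> (K *v w) = 0"
    by (simp add: w_def matrix_vector_right_distrib inner_add_right)
  then have "w = 0" using pd by (metis order_less_irrefl)
  then show "a + (\<chi> i. c$i * (y$i * l1 (margin K y a b $ i))) = 0" by (simp add: w_def q_def)
qed
lemma matrix_inv_works:
  fixes A :: "real^'n^'n" assumes "invertible A"
  shows "A ** matrix_inv A = mat 1" "matrix_inv A ** A = mat 1"
proof -
  have "\<exists>A'. A ** A' = mat 1 \<and> A' ** A = mat 1" using assms unfolding invertible_def by blast
  from someI_ex[OF this] show "A ** matrix_inv A = mat 1" "matrix_inv A ** A = mat 1"
    unfolding matrix_inv_def by auto
qed

lemma matrix_inv_vec: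
  fixes A :: "real^'n^'n" assumes "invertible A"
  shows "matrix_inv A *v (A *v x) = x" "A *v (matrix_inv A *v x) = x"
  using matrix_inv_works[OF assms] by (simp_all add: matrix_vector_mul_assoc)

lemma invertible_ker:
  fixes A :: "real^'n^'n" assumes "\<And>x. A *v x = 0 \<Longrightarrow> x = 0"
  shows "invertible A"
  using assms matrix_left_invertible_ker invertible_left_inverse by blast

lemma kkt_apply_Some:
  "(kkt_matrix K v *v z) $ Some i = z $ Some i + v$i * (K *v (\<chi> j. z $ Some j))$i + v$i * z $ None"
proof -
  have "(kkt_matrix K v *v z) $ Some i = v$i * z$None + (\<Sum>j\<in>UNIV. ((if i = j then 1 else 0) + v$i * K$i$j) * z$Some j)"
    by (simp add: kkt_matrix_def matrix_vector_mult_def sum_option mult.commute)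
  also have "\<dots> = v$i * z$None + (\<Sum>j\<in>UNIV. (if i = j then z$Some j else 0)) + (\<Sum>j\<in>UNIV. v$i * (K$i$j * z$Some j))"
  proof -
    have "((if i = j then 1 else 0) + v$i * K$i$j) * z$Some j = (if i = j then z$Some j else 0) + v$i * (K$i$j * z$Some j)" for j
      by (cases "i = j") (simp_all add: algebra_simps)
    then show ?thesis by (simp add: sum.distrib)
  qed
  also have "\<dots> = v$i * z$None + z$Some i + v$i * (K *v (\<chi> j. z $ Some j))$i"
    by (simp add: matrix_vector_mult_def sum_distrib_left)
  finally show ?thesis by simp
qed

lemma kkt_apply_None:
  "(kkt_matrix K v *v z) $ None = (\<Sum>j\<in>UNIV. z $ Some j)"
  by (simp add: kkt_matrix_def matrix_vector_mult_def sum_option)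

lemma kkt_invertible:
  fixes K :: "real^'n^'n"
  assumes pd: "\<forall>x. x \<noteq> 0 \<longrightarrow> x \<bullet> (K *v x) > 0"
    and vnn: "\<forall>i. v$i \<ge> 0" and vnz: "v \<noteq> 0"
  shows "invertible (kkt_matrix K v)"
proof (rule invertible_ker)
  fix z :: "real^'n option" assume z: "kkt_matrix K v *v z = 0"
  define x where "x = (\<chi> j. z $ Some j)"
  define s where "s = z $ None"
  define w where "w = K *v x + (\<chi> i. s)"
  have xz: "z $ Some i = x $ i" for i by (simp add: x_def)
  have xi: "x$i = - (v$i * w$i)" for i
    using arg_cong[OF z, of "\<lambda>z. z $ Some i"] unfolding kkt_apply_Some
    by (simp add: x_def[symmetric] s_def[symmetric] w_def algebra_simps xz)
  have sx: "(\<Sum>i\<in>UNIV. x$i) = 0"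
    using arg_cong[OF z, of "\<lambda>z. z $ None"] unfolding kkt_apply_None by (simp add: x_def)
  have "x \<bullet> (K *v x) = (\<Sum>i\<in>UNIV. x$i * (w$i - s))"
    by (simp add: inner_vec_sum w_def)
  also have "\<dots> = (\<Sum>i\<in>UNIV. x$i * w$i) - s * (\<Sum>i\<in>UNIV. x$i)"
    by (simp add: right_diff_distrib sum_subtractf sum_distrib_left algebra_simps)
  also have "\<dots> = (\<Sum>i\<in>UNIV. x$i * w$i)" by (simp add: sx)
  also have "\<dots> = - (\<Sum>i\<in>UNIV. v$i * (w$i)^2)"
    by (simp only: xi) (simp add: power2_eq_square sum_negf mult.assoc)
  also have "\<dots> \<le> 0" using vnn by (simp add: sum_nonneg)
  finally have x0: "x = 0" using pd by (metis not_less)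
  have "v$i * s = 0" for i
  proof -
    have "(\<chi> j. z $ Some j) = 0" using x0 by (simp add: x_def)
    then show ?thesis using arg_cong[OF z, of "\<lambda>z. z $ Some i"] unfolding kkt_apply_Some
      by (simp add: s_def[symmetric] x0 xz)
  qed
  moreover obtain i where "v$i \<noteq> 0" using vnz by (metis vec_eq_iff zero_index)
  ultimately have s0: "s = 0" by (metis mult_eq_0_iff)
  show "z = 0"
  proof (subst vec_eq_iff, intro allI)
    fix p show "z $ p = 0 $ p"
      using x0 s0 by (cases p) (auto simp: x_def s_def vec_eq_iff)
  qed
qed
definition alp :: "real^('n option) \<Rightarrow> real^'n" where "alp z = (\<chi> i. z $ Some i)"
definition zof :: "real^'n \<Rightarrow> real \<Rightarrow> real^('n option)" where
  "zof a b = (\<chi> p. case p of Some i \<Rightarrow> a$i | None \<Rightarrow> b)"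
definition mg :: "real^'n^'n \<Rightarrow> real^'n \<Rightarrow> real^('n option) \<Rightarrow> real^'n" where
  "mg K y z = margin K y (alp z) (z $ None)"
definition Gf :: "(real \<Rightarrow> real) \<Rightarrow> real^'n^'n \<Rightarrow> real^'n \<Rightarrow> real^'n \<Rightarrow> real^('n option) \<Rightarrow> real^('n option)" where
  "Gf l1 K y c z = (\<chi> p. case p of Some i \<Rightarrow> z $ Some i + c$i * (y$i * l1 (mg K y z $ i))
                                 | None \<Rightarrow> (\<Sum>i\<in>UNIV. z $ Some i))"
definition Rm :: "(real \<Rightarrow> real) \<Rightarrow> real^'n^'n \<Rightarrow> real^'n \<Rightarrow> real^('n option) \<Rightarrow> real^'n^('n option)" where
  "Rm l1 K y z = rhs_matrix (\<chi> i. y$i * l1 (mg K y z $ i))"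
definition Mm :: "(real \<Rightarrow> real) \<Rightarrow> real^'n^'n \<Rightarrow> real^'n \<Rightarrow> real^'n \<Rightarrow> real^('n option) \<Rightarrow> real^('n option)^('n option)" where
  "Mm l2 K y c z = kkt_matrix K (\<chi> i. c$i * l2 (mg K y z $ i))"
definition Fl :: "(real \<Rightarrow> real) \<Rightarrow> (real \<Rightarrow> real) \<Rightarrow> real^'n^'n \<Rightarrow> real^'n
     \<Rightarrow> ((real^'n) \<times> (real^('n option))) \<Rightarrow> ((real^'n) \<times> (real^('n option))) \<Rightarrow> ((real^'n) \<times> (real^('n option)))" where
  "Fl l1 l2 K y w d = (fst d, Rm l1 K y (snd w) *v fst d + Mm l2 K y (fst w) (snd w) *v snd d)"
definition Fd where "Fd l1 l2 K y w = Blinfun (Fl l1 l2 K y w)"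

lemma Fl_bl: "bounded_linear (Fl l1 l2 K y w)"
  unfolding Fl_def
  by (intro bounded_linear_Pair bounded_linear_add bounded_linear_fst
      bounded_linear_compose[OF matrix_vector_mul_bounded_linear bounded_linear_fst]
      bounded_linear_compose[OF matrix_vector_mul_bounded_linear bounded_linear_snd])

lemma Fd_apply: "blinfun_apply (Fd l1 l2 K y w) = Fl l1 l2 K y w"
  unfolding Fd_def by (rule bounded_linear_Blinfun_apply[OF Fl_bl])

lemma rhs_apply_Some: "(rhs_matrix u *v x) $ Some i = u$i * x$i"
proof -
  have "(rhs_matrix u *v x) $ Some i = (\<Sum>j\<in>UNIV. (if i = j then u$i else 0) * x$j)"
    by (simp add: rhs_matrix_def matrix_vector_mult_def)
  also have "\<dots> = (\<Sum>j\<in>UNIV. (if i = j then u$i * x$j else 0))"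
    by (rule sum.cong) auto
  finally show ?thesis by simp
qed

lemma rhs_apply_None: "(rhs_matrix u *v x) $ None = 0"
  by (simp add: rhs_matrix_def matrix_vector_mult_def)

lemma mg_expand: "mg K y z $ i = y$i * ((\<Sum>j\<in>UNIV. K$j$i * z $ Some j) + z $ None)"
  by (simp add: mg_def margin_def alp_def matrix_vector_mult_def transpose_def)

lemma Kvec_expand: "(K *v alp z) $ i = (\<Sum>j\<in>UNIV. K$i$j * z $ Some j)"
  by (simp add: alp_def matrix_vector_mult_def)

lemma continuous_on_vec_comp:
  fixes f :: "'a::topological_space \<Rightarrow> ('b::topological_space)^'i"
  assumes "\<And>p. continuous_on S (\<lambda>x. f x $ p)"
  shows "continuous_on S f"
  using continuous_on_vec_lambda[of S "\<lambda>p x. f x $ p", OF assms] by simp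


lemma cont_of_deriv:
  assumes d: "\<forall>x. (f has_real_derivative f' x) (at x)"
  shows "continuous_on UNIV f"
  using d by (intro continuous_at_imp_continuous_on) (auto intro: DERIV_isCont)

lemma Fl_cont:
  fixes K :: "real^'n^'n"
  assumes c1: "continuous_on UNIV l1" and c2: "continuous_on UNIV l2"
  shows "continuous_on UNIV (\<lambda>w. Fl l1 l2 K y w d)"
proof -
  have mgc: "continuous_on UNIV (\<lambda>w::(real^'n) \<times> (real^('n option)). mg K y (snd w) $ i)" for i
    unfolding mg_expand by (intro continuous_intros)
  have l1c: "continuous_on UNIV (\<lambda>w::(real^'n) \<times> (real^('n option)). l1 (mg K y (snd w) $ i))" for i
    using continuous_on_compose2[OF c1 mgc] by simp
  have l2c: "continuous_on UNIV (\<lambda>w::(real^'n) \<times> (real^('n option)). l2 (mg K y (snd w) $ i))" for i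
    using continuous_on_compose2[OF c2 mgc] by simp
  have "continuous_on UNIV (\<lambda>w. (Rm l1 K y (snd w) *v fst d + Mm l2 K y (fst w) (snd w) *v snd d) $ p)" for p
  proof (cases p)
    case None
    then show ?thesis by (simp add: Rm_def Mm_def rhs_apply_None kkt_apply_None)
  next
    case (Some i)
    then show ?thesis
      by (simp add: Rm_def Mm_def rhs_apply_Some kkt_apply_Some)
         (intro continuous_intros l1c l2c)
  qed
  then show ?thesis unfolding Fl_def
    by (intro continuous_on_Pair continuous_on_const continuous_on_vec_comp)
qed

lemma Fd_cont:
  assumes c1: "continuous_on UNIV l1" and c2: "continuous_on UNIV l2"
  shows "continuous_on UNIV (Fd l1 l2 K y)"
  by (rule continuous_on_blinfun_componentwise) (simp add: Fd_apply Fl_cont[OF c1 c2])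
lemma hd_vec_nth [derivative_intros]:
  "(f has_derivative f') F \<Longrightarrow> ((\<lambda>x. f x $ i) has_derivative (\<lambda>x. f' x $ i)) F"
  by (rule bounded_linear.has_derivative[OF bounded_linear_vec_nth])

lemma hd_chain_real:
  assumes d2: "\<forall>x. (l1 has_real_derivative l2 x) (at x)"
    and g: "(g has_derivative g') (at w)"
  shows "((\<lambda>x. l1 (g x)) has_derivative (\<lambda>h. l2 (g w) * g' h)) (at w)"
proof -
  have "(l1 has_derivative (\<lambda>h. l2 (g w) * h)) (at (g w))"
    using d2 unfolding has_field_derivative_def by blast
  from has_derivative_compose[OF g this] show ?thesis by simp
qed

lemma Ksym_entry: fixes K :: "real^'n^'n" assumes "transpose K = K" shows "K$j$i = K$i$j"
  using assms by (metis transpose_def vec_lambda_beta)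

lemma G_deriv_comp:
  fixes K :: "real^'n^'n"
  assumes sym: "transpose K = K" and y: "\<forall>i. y$i = 1 \<or> y$i = -1"
    and d2: "\<forall>x. (l1 has_real_derivative l2 x) (at x)"
  shows "((\<lambda>w'. Gf l1 K y (fst w') (snd w') $ p) has_derivative
          (\<lambda>d. (Rm l1 K y (snd w) *v fst d + Mm l2 K y (fst w) (snd w) *v snd d) $ p)) (at w)"
proof (cases p)
  case None
  have "((\<lambda>w'. \<Sum>i\<in>UNIV. snd w' $ Some i) has_derivative (\<lambda>d. \<Sum>i\<in>UNIV. snd d $ Some i)) (at w)"
    by (auto intro!: derivative_eq_intros)
  then show ?thesis using None
    by (simp add: Gf_def Rm_def Mm_def rhs_apply_None kkt_apply_None)
next
  case (Some i)
  define m where "m = mg K y (snd w) $ i"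
  have T: "(Rm l1 K y (snd w) *v fst d) $ Some i + (Mm l2 K y (fst w) (snd w) *v snd d) $ Some i
      = y$i * l1 m * fst d $ i + (snd d $ Some i + fst w $ i * l2 m * (\<Sum>j\<in>UNIV. K$i$j * snd d $ Some j)
         + fst w $ i * l2 m * snd d $ None)" for d
    unfolding Rm_def Mm_def rhs_apply_Some kkt_apply_Some
    by (simp add: m_def matrix_vector_mult_def)
  have gd: "((\<lambda>w'. mg K y (snd w') $ i) has_derivative
       (\<lambda>d. y$i * ((\<Sum>j\<in>UNIV. K$j$i * snd d $ Some j) + snd d $ None))) (at w)"
    unfolding mg_expand by (auto intro!: derivative_eq_intros)
  have "((\<lambda>w'. snd w' $ Some i + fst w' $ i * (y$i * l1 (mg K y (snd w') $ i))) has_derivative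
     (\<lambda>d. y$i * l1 m * fst d $ i + (snd d $ Some i + fst w $ i * l2 m * (\<Sum>j\<in>UNIV. K$i$j * snd d $ Some j)
         + fst w $ i * l2 m * snd d $ None))) (at w)"
  proof -
    have a1: "((\<lambda>w'. fst w' $ i) has_derivative (\<lambda>d. fst d $ i)) (at w)"
      by (intro hd_vec_nth has_derivative_fst has_derivative_ident)
    have a2: "((\<lambda>w'. y$i * l1 (mg K y (snd w') $ i)) has_derivative
        (\<lambda>d. y$i * (l2 m * (y$i * ((\<Sum>j\<in>UNIV. K$j$i * snd d $ Some j) + snd d $ None))))) (at w)"
      using has_derivative_mult_right[OF hd_chain_real[OF d2 gd], of "y$i"] by (simp add: m_def)
    have a4: "((\<lambda>w'. snd w' $ Some i) has_derivative (\<lambda>d. snd d $ Some i)) (at w)"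
      by (intro hd_vec_nth has_derivative_snd has_derivative_ident)
    from has_derivative_add[OF a4 has_derivative_mult[OF a1 a2]]
    show ?thesis
    proof (rule has_derivative_eq_rhs, intro ext)
      fix d
      show "snd d $ Some i + (fst w $ i * (y$i * (l2 m * (y$i * ((\<Sum>j\<in>UNIV. K$j$i * snd d $ Some j) + snd d $ None))))
             + fst d $ i * (y$i * l1 (mg K y (snd w) $ i))) =
         y$i * l1 m * fst d $ i + (snd d $ Some i + fst w $ i * l2 m * (\<Sum>j\<in>UNIV. K$i$j * snd d $ Some j)
         + fst w $ i * l2 m * snd d $ None)"
        using y[rule_format, of i] Ksym_entry[OF sym]
        by (elim disjE) (simp_all add: algebra_simps m_def)
    qed
  qed
  then show ?thesis using Some
    by (simp add: Gf_def T)
qed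

lemma F_deriv:
  fixes K :: "real^'n^'n"
  assumes sym: "transpose K = K" and y: "\<forall>i. y$i = 1 \<or> y$i = -1"
    and d2: "\<forall>x. (l1 has_real_derivative l2 x) (at x)"
  shows "((\<lambda>w. (fst w, Gf l1 K y (fst w) (snd w))) has_derivative blinfun_apply (Fd l1 l2 K y w)) (at w)"
proof -
  have "((\<lambda>w'. \<chi> p. Gf l1 K y (fst w') (snd w') $ p) has_derivative
          (\<lambda>d. \<chi> p. (Rm l1 K y (snd w) *v fst d + Mm l2 K y (fst w) (snd w) *v snd d) $ p)) (at w)"
    by (rule has_derivative_vec_lambda[OF G_deriv_comp[OF sym y d2]])
  then have "((\<lambda>w'. Gf l1 K y (fst w') (snd w')) has_derivative
          (\<lambda>d. Rm l1 K y (snd w) *v fst d + Mm l2 K y (fst w) (snd w) *v snd d)) (at w)"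
    unfolding vec_lambda_eta .
  then show ?thesis unfolding Fd_apply Fl_def
    by (intro has_derivative_Pair has_derivative_fst[OF has_derivative_ident])
qed
lemma continuous_on_det:
  fixes A :: "'a::topological_space \<Rightarrow> real^'n^'n"
  assumes "continuous_on S A"
  shows "continuous_on S (\<lambda>x. det (A x))"
  unfolding det_def
  by (intro continuous_on_sum continuous_on_mult continuous_on_const continuous_on_prod
      continuous_on_component assms)

lemma matrix_inv_entry:
  fixes A :: "real^'n^'n" assumes "invertible A"
  shows "matrix_inv A $ k $ j = det (\<chi> i j'. if j' = k then axis j 1 $ i else A$i$j') / det A"
proof -
  have d: "det A \<noteq> 0" using assms invertible_det_nz by blast
  have "A *v (matrix_inv A *v axis j 1) = axis j 1" by (rule matrix_inv_vec(2)[OF assms])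
  then have "matrix_inv A *v axis j 1 = (\<chi> k. det (\<chi> i j'. if j' = k then axis j 1 $ i else A$i$j') / det A)"
    using cramer[OF d] by blast
  then have "(matrix_inv A *v axis j 1) $ k = det (\<chi> i j'. if j' = k then axis j 1 $ i else A$i$j') / det A"
    by simp
  then show ?thesis by (simp only: mat_axis)
qed

lemma continuous_on_matrix_inv:
  fixes A :: "'a::topological_space \<Rightarrow> real^'n^'n"
  assumes cont: "continuous_on S A" and inv: "\<forall>x\<in>S. invertible (A x)"
  shows "continuous_on S (\<lambda>x. matrix_inv (A x))"
proof (rule continuous_on_vec_comp, rule continuous_on_vec_comp)
  fix k j
  have "continuous_on S (\<lambda>x. det (\<chi> i j'. if j' = k then axis j 1 $ i else A x $i$j') / det (A x))"
  proof (intro continuous_on_divide continuous_on_det)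
    show "continuous_on S (\<lambda>x. \<chi> i j'. if j' = k then axis j 1 $ i else A x $ i $ j')"
    proof (rule continuous_on_vec_lambda, rule continuous_on_vec_lambda)
      fix i j' show "continuous_on S (\<lambda>x. if j' = k then axis j 1 $ i else A x $ i $ j')"
        by (cases "j' = k") (simp_all add: continuous_on_const continuous_on_component[OF continuous_on_component[OF cont]])
    qed
    show "continuous_on S A" by (rule cont)
    show "\<forall>x\<in>S. det (A x) \<noteq> 0" using inv invertible_det_nz by blast
  qed
  then show "continuous_on S (\<lambda>x. matrix_inv (A x) $ k $ j)"
    by (rule continuous_on_eq) (simp add: matrix_inv_entry inv)
qed
lemma alp_bl: "bounded_linear (alp :: real^('n option) \<Rightarrow> real^'n)"
proof -
  have "linear (alp :: real^('n option) \<Rightarrow> real^'n)"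
    by (rule linearI) (simp_all add: alp_def vec_eq_iff)
  then show ?thesis using linear_conv_bounded_linear by blast
qed

lemma alp_zof [simp]: "alp (zof a b) = a" by (simp add: alp_def zof_def)
lemma zof_None [simp]: "zof a b $ None = b" by (simp add: zof_def)
lemma mg_zof: "mg K y (zof a b) = margin K y a b" by (simp add: mg_def)

lemma Gf_stat:
  "Gf l1 K y c z = 0 \<longleftrightarrow>
    (alp z + (\<chi> i. c$i * (y$i * l1 (margin K y (alp z) (z $ None) $ i))) = 0 \<and>
     (\<Sum>i\<in>UNIV. c$i * (y$i * l1 (margin K y (alp z) (z $ None) $ i))) = 0)"
  (is "?L \<longleftrightarrow> ?A \<and> ?B")
proof -
  define u where "u i = c$i * (y$i * l1 (margin K y (alp z) (z $ None) $ i))" for i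
  have GS: "Gf l1 K y c z $ Some i = z $ Some i + u i" for i
    by (simp add: Gf_def u_def mg_def)
  have GN: "Gf l1 K y c z $ None = (\<Sum>i\<in>UNIV. z $ Some i)" by (simp add: Gf_def)
  have A: "?A \<longleftrightarrow> (\<forall>i. z $ Some i + u i = 0)" by (simp add: vec_eq_iff alp_def u_def)
  have L: "?L \<longleftrightarrow> (\<forall>i. z $ Some i + u i = 0) \<and> (\<Sum>i\<in>UNIV. z $ Some i) = 0"
  proof
    assume "?L" then show "(\<forall>i. z $ Some i + u i = 0) \<and> (\<Sum>i\<in>UNIV. z $ Some i) = 0"
      using GS GN by (metis zero_index)
  next
    assume h: "(\<forall>i. z $ Some i + u i = 0) \<and> (\<Sum>i\<in>UNIV. z $ Some i) = 0"
    show ?L unfolding vec_eq_iff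
    proof
      fix p show "Gf l1 K y c z $ p = 0 $ p" using h GS GN by (cases p) auto
    qed
  qed
  have "(\<Sum>i\<in>UNIV. z $ Some i) = - (\<Sum>i\<in>UNIV. u i)" if h: "\<forall>i. z $ Some i + u i = 0"
  proof -
    have "(\<Sum>i\<in>UNIV. z $ Some i) = (\<Sum>i\<in>UNIV. - u i)"
      by (rule sum.cong) (use h in \<open>auto simp: eq_neg_iff_add_eq_0\<close>)
    then show ?thesis by (simp add: sum_negf)
  qed
  then show ?thesis unfolding L A by (auto simp: u_def)
qed

lemma continuous_on_kkt:
  assumes "continuous_on S v"
  shows "continuous_on S (\<lambda>x. kkt_matrix K (v x))"
proof (rule continuous_on_vec_comp, rule continuous_on_vec_comp)
  fix p q show "continuous_on S (\<lambda>x. kkt_matrix K (v x) $ p $ q)"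
    by (cases p; cases q)
       (simp_all add: kkt_matrix_def continuous_on_const continuous_on_add continuous_on_mult
         continuous_on_component[OF assms])
qed

lemma continuous_on_rhs:
  assumes "continuous_on S u"
  shows "continuous_on S (\<lambda>x. rhs_matrix (u x))"
proof (rule continuous_on_vec_comp, rule continuous_on_vec_comp)
  fix p q show "continuous_on S (\<lambda>x. rhs_matrix (u x) $ p $ q)"
    by (cases p; cases "p = Some q")
       (simp_all add: rhs_matrix_def continuous_on_const continuous_on_component[OF assms])
qed

lemma continuous_on_mmult:
  fixes A :: "'a::topological_space \<Rightarrow> real^'m^'n" and B :: "'a \<Rightarrow> real^'k^'m"
  assumes "continuous_on S A" "continuous_on S B"
  shows "continuous_on S (\<lambda>x. A x ** B x)"
  unfolding matrix_matrix_mult_def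
  by (intro continuous_on_vec_lambda continuous_on_sum continuous_on_mult
      continuous_on_component assms)

lemma continuous_on_mvmult:
  fixes A :: "'a::topological_space \<Rightarrow> real^'m^'n"
  assumes "continuous_on S A"
  shows "continuous_on S (\<lambda>x. A x *v e)"
  unfolding matrix_vector_mult_def
  by (intro continuous_on_vec_lambda continuous_on_sum continuous_on_mult continuous_on_const
      continuous_on_component assms)

lemma continuous_on_alp:
  assumes "continuous_on S f" shows "continuous_on S (\<lambda>x. alp (f x))"
  unfolding alp_def by (intro continuous_on_vec_lambda continuous_on_component assms)

lemma Fd_bij_invertible:
  fixes K :: "real^'n^'n"
  assumes "bij (blinfun_apply (Fd l1 l2 K y w))"
  shows "invertible (Mm l2 K y (fst w) (snd w))"
proof (rule invertible_ker)
  fix x assume x: "Mm l2 K y (fst w) (snd w) *v x = 0"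
  have "blinfun_apply (Fd l1 l2 K y w) (0, x) = blinfun_apply (Fd l1 l2 K y w) (0, 0)"
    using x by (simp add: Fd_apply Fl_def)
  moreover have "inj (blinfun_apply (Fd l1 l2 K y w))" using assms by (rule bij_is_inj)
  ultimately have "((0::real^'n), x) = (0, 0)" by (rule injD[rotated])
  then show "x = 0" by simp
qed
lemma mvmult_uminus: "(- (A::real^'m^'n)) *v x = - (A *v x)"
  by (simp add: matrix_vector_mult_def vec_eq_iff sum_negf)

lemma mvmult_uminus_right: "(A::real^'m^'n) *v (- x) = - (A *v x)"
  by (simp add: matrix_vector_mult_def vec_eq_iff sum_negf)

theorem theorem5:
  fixes K :: "real^'n^'n" and y c alpha0 :: "real^'n" and b0 :: real
    and l l1 l2 :: "real \<Rightarrow> real"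
  assumes y: "\<forall>i. y$i = 1 \<or> y$i = -1"
    and sym: "transpose K = K"
    and pd: "\<forall>x. x \<noteq> 0 \<longrightarrow> x \<bullet> (K *v x) > 0"
    and cvx: "convex_on UNIV l"
    and d1: "\<forall>x. (l has_real_derivative l1 x) (at x)"
    and d2: "\<forall>x. (l1 has_real_derivative l2 x) (at x)"
    and cont2: "continuous_on UNIV l2"
    and c_nonneg: "\<forall>i. c$i \<ge> 0"
    and sol: "is_solution l K y c alpha0 b0"
    and v_nz: "(\<chi> i. c$i * l2 (margin K y alpha0 b0 $ i)) \<noteq> 0"
  shows "(\<forall>a b. is_solution l K y c a b \<longrightarrow> a = alpha0 \<and> b = b0) \<and>
    (\<exists>U A B DA DB. open U \<and> c \<in> U \<and> A c = alpha0 \<and> B c = b0 \<and>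
       (\<forall>c'\<in>U. (\<forall>i. c'$i \<ge> 0) \<longrightarrow>
           (\<forall>a b. is_solution l K y c' a b \<longleftrightarrow> a = A c' \<and> b = B c')) \<and>
       (\<forall>c'\<in>U. (A has_derivative blinfun_apply (DA c')) (at c') \<and>
                 (B has_derivative blinfun_apply (DB c')) (at c')) \<and>
       continuous_on U DA \<and> continuous_on U DB \<and>
       (let u = (\<chi> i. y$i * l1 (margin K y alpha0 b0 $ i));
            v = (\<chi> i. c$i * l2 (margin K y alpha0 b0 $ i));
            M = kkt_matrix K v
        in invertible M \<and>
           stacked_jacobian (blinfun_apply (DA c)) (blinfun_apply (DB c))
             = - (matrix_inv M ** rhs_matrix u)))"
proof -
  have c1: "continuous_on UNIV l1" by (rule cont_of_deriv[OF d2])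
  note st = sol_stationary[OF sym pd d1 sol]
  have part1: "\<forall>a b. is_solution l K y c a b \<longrightarrow> a = alpha0 \<and> b = b0"
    using stat_unique[OF sym pd cvx d1 d2 y c_nonneg st v_nz] by blast
  define z0 where "z0 = zof alpha0 b0"
  have mg0: "mg K y z0 = margin K y alpha0 b0" by (simp add: z0_def mg_zof)
  have G0: "Gf l1 K y c z0 = 0" unfolding Gf_stat using st by (simp add: z0_def)
  define F where "F = (\<lambda>w::(real^'n) \<times> (real^('n option)). (fst w, Gf l1 K y (fst w) (snd w)))"
  define v0 where "v0 = (\<chi> i. c$i * l2 (margin K y alpha0 b0 $ i))"
  define u0 where "u0 = (\<chi> i. y$i * l1 (margin K y alpha0 b0 $ i))"
  have M0eq: "Mm l2 K y c z0 = kkt_matrix K v0" by (simp add: Mm_def mg0 v0_def)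
  have R0eq: "Rm l1 K y z0 = rhs_matrix u0" by (simp add: Rm_def mg0 u0_def)
  have inv0: "invertible (kkt_matrix K v0)"
  proof (rule kkt_invertible[OF pd])
    show "\<forall>i. 0 \<le> v0 $ i" using c_nonneg cvx_l2_nonneg[OF cvx d1 d2] by (simp add: v0_def)
    show "v0 \<noteq> 0" using v_nz by (simp add: v0_def)
  qed
  define Mi0 where "Mi0 = matrix_inv (kkt_matrix K v0)"
  define invf where "invf = Blinfun (\<lambda>d::(real^'n) \<times> (real^('n option)). (fst d, Mi0 *v (snd d - rhs_matrix u0 *v fst d)))"
  have invf_bl: "bounded_linear (\<lambda>d::(real^'n) \<times> (real^('n option)). (fst d, Mi0 *v (snd d - rhs_matrix u0 *v fst d)))"
    by (intro bounded_linear_Pair bounded_linear_fst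
        bounded_linear_compose[OF matrix_vector_mul_bounded_linear]
        bounded_linear_sub bounded_linear_snd
        bounded_linear_compose[OF matrix_vector_mul_bounded_linear bounded_linear_fst])
  have invf_apply: "blinfun_apply invf = (\<lambda>d. (fst d, Mi0 *v (snd d - rhs_matrix u0 *v fst d)))"
    unfolding invf_def by (rule bounded_linear_Blinfun_apply[OF invf_bl])
  have invf_ok: "invf o\<^sub>L Fd l1 l2 K y (c, z0) = id_blinfun"
  proof (rule blinfun_eqI)
    fix d :: "(real^'n) \<times> (real^('n option))"
    show "blinfun_apply (invf o\<^sub>L Fd l1 l2 K y (c, z0)) d = blinfun_apply id_blinfun d"
      using matrix_inv_vec(1)[OF inv0, of "snd d"]
      by (simp add: invf_apply Fd_apply Fl_def M0eq R0eq Mi0_def)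
  qed
  have Fder: "\<And>w. w \<in> UNIV \<Longrightarrow> (F has_derivative blinfun_apply (Fd l1 l2 K y w)) (at w)"
    unfolding F_def by (rule F_deriv[OF sym y d2])
  obtain U' V g g' where "open U'" "U' \<subseteq> UNIV" and cU': "(c, z0) \<in> U'" and "open V"
    and FV: "F (c, z0) \<in> V" and hom: "homeomorphism U' V F g"
    and gder: "\<And>w. w \<in> V \<Longrightarrow> (g has_derivative (g' w)) (at w)"
    and g'eq: "\<And>w. w \<in> V \<Longrightarrow> g' w = inv (blinfun_apply (Fd l1 l2 K y (g w)))"
    and gbij: "\<And>w. w \<in> V \<Longrightarrow> bij (blinfun_apply (Fd l1 l2 K y (g w)))"
    using inverse_function_theorem[OF open_UNIV Fder Fd_cont[OF c1 cont2] UNIV_I invf_ok] by blast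
  have Fc: "F (c, z0) = (c, 0)" by (simp add: F_def G0)
  have hom1: "\<And>x. x \<in> U' \<Longrightarrow> g (F x) = x" and hom2: "\<And>w. w \<in> V \<Longrightarrow> F (g w) = w"
    and homg: "continuous_on V g" and homU: "g ` V = U'"
    using hom unfolding homeomorphism_def by auto
  define W where "W = UNIV \<inter> (\<lambda>c'. (c', 0::real^('n option))) -` V"
  have oW: "open W" unfolding W_def
    by (rule continuous_open_preimage) (auto intro!: continuous_intros \<open>open V\<close>)
  define Z where "Z c' = snd (g (c', 0))" for c'
  have gW: "g (c', 0) = (c', Z c')" and GZ: "Gf l1 K y c' (Z c') = 0" if "c' \<in> W" for c'
  proof -
    have "(c', 0) \<in> V" using that by (simp add: W_def)
    from hom2[OF this] have "F (g (c', 0)) = (c', 0)" .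
    then have "fst (g (c', 0)) = c'" and "Gf l1 K y c' (Z c') = 0"
      unfolding F_def Z_def by (auto dest: arg_cong[where f=fst] arg_cong[where f=snd])
    then show "g (c', 0) = (c', Z c')" "Gf l1 K y c' (Z c') = 0" by (auto simp: Z_def prod_eq_iff)
  qed
  have cZ: "continuous_on W Z"
  proof -
    have "continuous_on W (\<lambda>c'. (c', 0::real^('n option)))" by (intro continuous_intros)
    moreover have "(\<lambda>c'. (c', 0::real^('n option))) ` W \<subseteq> V" by (auto simp: W_def)
    ultimately have "continuous_on W (\<lambda>c'. g (c', 0))" using continuous_on_compose2[OF homg] by blast
    then show ?thesis unfolding Z_def by (intro continuous_intros)
  qed
  define \<phi> where "\<phi> c' = (\<chi> i. c'$i * l2 (mg K y (Z c') $ i))" for c'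
  have mgc: "continuous_on W (\<lambda>c'. mg K y (Z c') $ i)" for i
    unfolding mg_expand by (intro continuous_intros cZ)
  have l1c: "continuous_on W (\<lambda>c'. l1 (mg K y (Z c') $ i))" for i
    using continuous_on_compose2[OF c1 mgc] by simp
  have l2c: "continuous_on W (\<lambda>c'. l2 (mg K y (Z c') $ i))" for i
    using continuous_on_compose2[OF cont2 mgc] by simp
  have c\<phi>: "continuous_on W \<phi>" unfolding \<phi>_def
    by (intro continuous_on_vec_lambda continuous_on_mult continuous_on_component continuous_on_id l2c)
  define U where "U = W \<inter> \<phi> -` (- {0})"
  have oU: "open U" unfolding U_def by (rule continuous_open_preimage[OF c\<phi> oW]) (rule open_Compl, rule closed_singleton)
  have UW: "U \<subseteq> W" by (auto simp: U_def)
  have cW: "c \<in> W" using FV Fc by (simp add: W_def)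
  have Zc: "Z c = z0" using hom1[OF cU'] Fc by (simp add: Z_def)
  have cU: "c \<in> U" using cW v_nz by (simp add: U_def \<phi>_def Zc mg0)
  define A where "A c' = alp (Z c')" for c'
  define B where "B c' = Z c' $ None" for c'
  have AB_Z: "zof (A c') (B c') = Z c'" for c'
    by (simp add: A_def B_def zof_def alp_def vec_eq_iff split: option.split)
  have mgAB: "margin K y (A c') (B c') = mg K y (Z c')" for c'
    by (simp add: mg_def A_def B_def)
  have stat: "A c' + (\<chi> i. c'$i * (y$i * l1 (margin K y (A c') (B c') $ i))) = 0 \<and>
     (\<Sum>i\<in>UNIV. c'$i * (y$i * l1 (margin K y (A c') (B c') $ i))) = 0" if "c' \<in> W" for c'
    using GZ[OF that] unfolding Gf_stat by (simp add: A_def B_def)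
  have part_sol: "\<forall>c'\<in>U. (\<forall>i. c'$i \<ge> 0) \<longrightarrow>
           (\<forall>a b. is_solution l K y c' a b \<longleftrightarrow> a = A c' \<and> b = B c')"
  proof (intro ballI impI allI iffI)
    fix c' a b assume cU': "c' \<in> U" and cn: "\<forall>i. c'$i \<ge> 0"
    then have cW': "c' \<in> W" using UW by blast
    note s = stat[OF cW']
    have vnz': "(\<chi> i. c'$i * l2 (margin K y (A c') (B c') $ i)) \<noteq> 0"
      using cU' by (simp add: U_def \<phi>_def mgAB)
    {
      assume "is_solution l K y c' a b"
      then show "a = A c' \<and> b = B c'"
        using stat_unique[OF sym pd cvx d1 d2 y cn conjunct1[OF s] conjunct2[OF s] vnz'] by blast
    next
      assume "a = A c' \<and> b = B c'"
      then show "is_solution l K y c' a b"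
        using stat_optimal[OF sym pd cvx d1 cn conjunct1[OF s] conjunct2[OF s]] by simp
    }
  qed
  define Mz where "Mz c' = Mm l2 K y c' (Z c')" for c'
  define Rz where "Rz c' = Rm l1 K y (Z c')" for c'
  define Dm where "Dm c' = - (matrix_inv (Mz c') ** Rz c')" for c'
  have invz: "invertible (Mz c')" if "c' \<in> W" for c'
  proof -
    have "(c', 0) \<in> V" using that by (simp add: W_def)
    from Fd_bij_invertible[OF gbij[OF this]] show ?thesis by (simp add: gW[OF that] Mz_def)
  qed
  have gder': "((\<lambda>c'. g (c', 0)) has_derivative (\<lambda>h. (h, Dm c' *v h))) (at c')" if "c' \<in> W" for c'
  proof -
    have V': "(c', 0) \<in> V" using that by (simp add: W_def)
    have pd': "((\<lambda>c'. (c', 0::real^('n option))) has_derivative (\<lambda>h. (h, 0))) (at c')"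
      by (intro has_derivative_Pair has_derivative_ident has_derivative_const)
    from has_derivative_compose[OF pd' gder[OF V']]
    have "((\<lambda>c'. g (c', 0)) has_derivative (\<lambda>h. g' (c', 0) (h, 0))) (at c')" .
    moreover have "g' (c', 0) (h, 0) = (h, Dm c' *v h)" for h
    proof -
      have inj: "inj (blinfun_apply (Fd l1 l2 K y (g (c', 0))))" using gbij[OF V'] by (rule bij_is_inj)
      have "blinfun_apply (Fd l1 l2 K y (g (c', 0))) (h, Dm c' *v h) = (h, 0)"
        using matrix_inv_vec(2)[OF invz[OF that], of "Rz c' *v h"]
        by (simp add: Fd_apply Fl_def gW[OF that] Dm_def Mz_def Rz_def matrix_vector_mul_assoc[symmetric]
            mvmult_uminus mvmult_uminus_right)
      then show ?thesis using g'eq[OF V'] inv_f_f[OF inj] by metis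
    qed
    ultimately show ?thesis by simp
  qed
  define DA where "DA c' = Blinfun (\<lambda>h. alp (Dm c' *v h))" for c'
  define DB where "DB c' = Blinfun (\<lambda>h. (Dm c' *v h) $ None)" for c'
  have DA_apply: "blinfun_apply (DA c') = (\<lambda>h. alp (Dm c' *v h))" for c'
    unfolding DA_def
    by (rule bounded_linear_Blinfun_apply, rule bounded_linear_compose[OF alp_bl matrix_vector_mul_bounded_linear])
  have DB_apply: "blinfun_apply (DB c') = (\<lambda>h. (Dm c' *v h) $ None)" for c'
    unfolding DB_def
    by (rule bounded_linear_Blinfun_apply, rule bounded_linear_compose[OF bounded_linear_vec_nth matrix_vector_mul_bounded_linear])
  have A_fun: "A = (\<lambda>c'. alp (snd (g (c', 0))))" by (simp add: fun_eq_iff A_def Z_def)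
  have B_fun: "B = (\<lambda>c'. snd (g (c', 0)) $ None)" by (simp add: fun_eq_iff B_def Z_def)
  have part_der: "\<forall>c'\<in>U. (A has_derivative blinfun_apply (DA c')) (at c') \<and>
                 (B has_derivative blinfun_apply (DB c')) (at c')"
  proof
    fix c' assume "c' \<in> U"
    then have cW': "c' \<in> W" using UW by blast
    note gd = gder'[OF cW']
    have "((\<lambda>c'. alp (snd (g (c', 0)))) has_derivative (\<lambda>h. alp (snd (h, Dm c' *v h)))) (at c')"
      by (rule bounded_linear.has_derivative[OF alp_bl has_derivative_snd[OF gd]])
    then have "(A has_derivative blinfun_apply (DA c')) (at c')"
      by (simp add: DA_apply flip: A_fun)
    moreover have "((\<lambda>c'. snd (g (c', 0)) $ None) has_derivative (\<lambda>h. snd (h, Dm c' *v h) $ None)) (at c')"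
      by (rule hd_vec_nth[OF has_derivative_snd[OF gd]])
    then have "(B has_derivative blinfun_apply (DB c')) (at c')"
      by (simp add: DB_apply flip: B_fun)
    ultimately show "(A has_derivative blinfun_apply (DA c')) (at c') \<and>
                 (B has_derivative blinfun_apply (DB c')) (at c')" by blast
  qed
  have cDm: "continuous_on U Dm"
  proof -
    have cMz: "continuous_on W Mz" unfolding Mz_def Mm_def
      by (intro continuous_on_kkt continuous_on_vec_lambda continuous_on_mult continuous_on_component
          continuous_on_id l2c)
    have cRz: "continuous_on W Rz" unfolding Rz_def Rm_def
      by (intro continuous_on_rhs continuous_on_vec_lambda continuous_on_mult continuous_on_const l1c)
    have "continuous_on W (\<lambda>c'. matrix_inv (Mz c'))"
      by (rule continuous_on_matrix_inv[OF cMz]) (use invz in blast)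
    then have "continuous_on W Dm" unfolding Dm_def
      by (intro continuous_on_minus continuous_on_mmult cRz)
    then show ?thesis using UW continuous_on_subset by blast
  qed
  have cDA: "continuous_on U DA"
    by (rule continuous_on_blinfun_componentwise)
       (simp add: DA_apply continuous_on_alp continuous_on_mvmult cDm)
  have cDB: "continuous_on U DB"
    by (rule continuous_on_blinfun_componentwise)
       (simp add: DB_apply continuous_on_component continuous_on_mvmult cDm)
  have final: "stacked_jacobian (blinfun_apply (DA c)) (blinfun_apply (DB c))
       = - (matrix_inv (kkt_matrix K v0) ** rhs_matrix u0)"
  proof -
    have D0: "Dm c = - (matrix_inv (kkt_matrix K v0) ** rhs_matrix u0)"
      by (simp add: Dm_def Mz_def Rz_def Zc M0eq R0eq)
    have "stacked_jacobian (blinfun_apply (DA c)) (blinfun_apply (DB c)) = Dm c"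
      unfolding vec_eq_iff
    proof (intro allI)
      fix p j show "stacked_jacobian (blinfun_apply (DA c)) (blinfun_apply (DB c)) $ p $ j = Dm c $ p $ j"
        by (cases p) (simp_all add: stacked_jacobian_def DA_apply DB_apply alp_def mat_axis)
    qed
    then show ?thesis using D0 by simp
  qed
  have Ac: "A c = alpha0" by (simp add: A_def Zc z0_def)
  have Bc: "B c = b0" by (simp add: B_def Zc z0_def)
  show ?thesis
    unfolding Let_def
    using part1 oU cU Ac Bc part_sol part_der cDA cDB inv0 final
    unfolding v0_def u0_def by blast
qed
end
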